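(* Let $(U,Y_U,\mathbf 1_U)$ and $(V,Y_V,\mathbf 1_V)$ be $\hbar$-adic nonlocal vertex algebras, and let $S$ be a $\mathbb{C}[[\hbar]]$-submodule of $U$ such that $U$ is generated by $S$. Assume there is a $U$-module structure $Y_V^U$ on $V$ such that $Y_V^U(u,z)\mathbf 1_V\in V[[z]]$ for all $u\in U$. Suppose $\psi^0:S\to V$ is a $\mathbb{C}[[\hbar]]$-module map with $Y_V^U(s,z)=Y_V(\psi^0(s),z)$ for all $s\in S$. Then there is a homomorphism of $\hbar$-adic nonlocal vertex algebras $\psi:U\to V$ with $\psi(s)=\psi^0(s)$ for all $s\in S$.
   Context: Let $\hbar$ be a formal variable. A $\mathbb{C}[[\hbar]]$-module is topologically free if it equals $W_0[[\hbar]]$ for a vector space $W_0$. For topologically free $W=W_0[[\hbar]]$ let $\mathcal{E}_\hbar(W)=\mathrm{Hom}_{\mathbb{C}[[\hbar]]}(W,W_0((z))[[\hbar]])$, and let $\pi_n$ denote reduction modulo $\hbar^n$. A sequence $(a_1(z),\dots,a_r(z))$ in $\mathcal{E}_\hbar(W)$ is $\hbar$-adically compatible if for each $n\ge1$ there is $m\ge0$ with $\prod_{i<j}(z_i-z_j)^m\pi_n(a_1(z_1))\cdots\pi_n(a_r(z_r))\in\mathrm{Hom}(W/\hbar^nW,(W/\hbar^nW)((z_1,\dots,z_r)))$. For such a pair $(a(z),b(z))$, with $k_n$ chosen so that $(z_1-z)^{k_n}\pi_n(a(z_1))\pi_n(b(z))\in \mathrm{Hom}(W/\hbar^nW,(W/\hbar^nW)((z_1,z)))$,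 $Y_{\mathcal E}(a(z),z_0)b(z)$ is the element of $\mathcal{E}_\hbar(W)[[z_0^{\pm1}]]$ whose reduction mod $\hbar^n$ is $z_0^{-k_n}\big((z_1-z)^{k_n}\pi_n(a(z_1))\pi_n(b(z))\big)|_{z_1=z+z_0}$ for all $n$. An $\hbar$-adic nonlocal vertex algebra is a topologically free $V$ with $\mathbf{1}\in V$ and $\mathbb{C}[[\hbar]]$-linear $Y(\cdot,z):V\to\mathcal{E}_\hbar(V)$ such that $Y(\mathbf 1,z)=\mathrm{id}$, $Y(v,z)\mathbf 1\in V[[z]]$, $\lim_{z\to0}Y(v,z)\mathbf 1=v$, $\{Y(u,z)\}_{u\in V}$ is $\hbar$-adically compatible and $Y_{\mathcal E}(Y(u,z),z_0)Y(v,z)=Y(Y(u,z_0)v,z)$. A $V$-module is a topologically free $W$ with $\mathbb{C}[[\hbar]]$-linear $Y_W:V\to\mathcal{E}_\hbar(W)$, $Y_W(\mathbf 1,z)=1_W$, $\{Y_W(u,z)\}$ $\hbar$-adically compatible, and $Y_{\mathcal E}(Y_W(u,z),z_0)Y_W(v,z)=Y_W(Y(u,z_0)v,z)$. A homomorphism $\psi:U\to V$ of $\hbar$-adic nonlocal vertex algebras is a $\mathbb{C}[[\hbar]]$-linear map with $\psi(\mathbf 1_U)=\mathbf 1_V$ and $\psi(Y_U(u,z)v)=Y_V(\psi(u),z)\psi(v)$. For a $\mathbb{C}[[\hbar]]$-submodule $U'$, $[U']=\{v:\hbar^nv\in U'\text{ for some }n\}$ and $\overline{U'}$ is its $\hbar$-adic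 closure. $U$ is generated by a subset $S$ if the only closed subspace $U'\ni\mathbf 1_U$ containing $S$, closed under all products $u_mv$ and with $[U']=U'$, is $U$ itself. *)

theory Defs
  imports Complex_Main
begin

text \<open>Concrete model of topologically free C[[h]]-modules W = W0[[h]]:
  an element is a function nat => W0 (coefficient of h^k), where the type 'a
  with a complex scalar action sc (a C-vector space) plays the role of W0.\<close>

type_synonym 'a hser = "nat \<Rightarrow> 'a"
type_synonym 'a hlser = "nat \<Rightarrow> int \<Rightarrow> 'a"   \<comment> \<open>W0((z))[[h]], h-degree then z-exponent\<close>
type_synonym 'a hop = "'a hser \<Rightarrow> 'a hlser"

definition hsmult :: "(complex \<Rightarrow> 'a \<Rightarrow> 'a) \<Rightarrow> complex hser \<Rightarrow> ('a::ab_group_add) hser \<Rightarrow> 'a hser" where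
  "hsmult sc c w = (\<lambda>k. \<Sum>i\<le>k. sc (c i) (w (k - i)))"

definition Esmult :: "(complex \<Rightarrow> 'a \<Rightarrow> 'a) \<Rightarrow> complex hser \<Rightarrow> ('a::ab_group_add) hlser \<Rightarrow> 'a hlser" where
  "Esmult sc c F = (\<lambda>k m. \<Sum>i\<le>k. sc (c i) (F (k - i) m))"

definition hadd :: "('a::ab_group_add) hser \<Rightarrow> 'a hser \<Rightarrow> 'a hser" where
  "hadd x y = (\<lambda>k. x k + y k)"

definition hladd :: "('a::ab_group_add) hlser \<Rightarrow> 'a hlser \<Rightarrow> 'a hlser" where
  "hladd F G = (\<lambda>k m. F k m + G k m)"

definition hpow :: "nat \<Rightarrow> complex hser" where
  "hpow n = (\<lambda>i. if i = n then 1 else 0)"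

definition hlinear :: "(complex \<Rightarrow> 'a \<Rightarrow> 'a) \<Rightarrow> (complex \<Rightarrow> 'b \<Rightarrow> 'b)
    \<Rightarrow> (('a::ab_group_add) hser \<Rightarrow> ('b::ab_group_add) hser) \<Rightarrow> bool" where
  "hlinear sa sb f \<longleftrightarrow> (\<forall>x y. f (hadd x y) = hadd (f x) (f y)) \<and>
     (\<forall>c x. f (hsmult sa c x) = hsmult sb c (f x))"

text \<open>a is in E_h(W) = Hom_{C[[h]]}(W, W0((z))[[h]])\<close>
definition inE :: "(complex \<Rightarrow> 'a \<Rightarrow> 'a) \<Rightarrow> ('a::ab_group_add) hop \<Rightarrow> bool" where
  "inE sc a \<longleftrightarrow> (\<forall>x y. a (hadd x y) = hladd (a x) (a y)) \<and>
     (\<forall>c x. a (hsmult sc c x) = Esmult sc c (a x)) \<and>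
     (\<forall>w k. \<exists>N. \<forall>m<N. a w k m = 0)"

definition vcoef :: "'a hlser \<Rightarrow> int \<Rightarrow> 'a hser" where
  "vcoef F m = (\<lambda>k. F k m)"

text \<open>The formal product a_1(z_1)...a_r(z_r) w, as a series in z_1..z_r:
  coefficient at exponent vector e (e i is the exponent of z_(i+1)).\<close>
fun prodser :: "'a hop list \<Rightarrow> 'a hser \<Rightarrow> (nat \<Rightarrow> int) \<Rightarrow> 'a hser" where
  "prodser [] w e = w"
| "prodser (a # as) w e = (\<lambda>k. a (prodser as w (\<lambda>i. e (Suc i))) k (e 0))"

text \<open>multiplication by (z_i - z_j) on formal series in several variables\<close>
definition mulz :: "nat \<Rightarrow> nat \<Rightarrow> ((nat \<Rightarrow> int) \<Rightarrow> ('a::ab_group_add) hser)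
    \<Rightarrow> ((nat \<Rightarrow> int) \<Rightarrow> 'a hser)" where
  "mulz i j G = (\<lambda>e k. G (e(i := e i - 1)) k - G (e(j := e j - 1)) k)"

text \<open>multiplication by prod_{i<j<r} (z_i - z_j)^m\<close>
definition polymult :: "nat \<Rightarrow> nat \<Rightarrow> ((nat \<Rightarrow> int) \<Rightarrow> ('a::ab_group_add) hser)
    \<Rightarrow> ((nat \<Rightarrow> int) \<Rightarrow> 'a hser)" where
  "polymult m r G = foldr (\<lambda>(i, j) H. (mulz i j ^^ m) H)
      [(i, j). i \<leftarrow> [0..<r], j \<leftarrow> [0..<r], i < j] G"

text \<open>modulo h^n, the r-variable series lies in (W/h^nW)((z_1,...,z_r))\<close>
definition lowbdd :: "nat \<Rightarrow> nat \<Rightarrow> ((nat \<Rightarrow> int) \<Rightarrow> ('a::zero) hser) \<Rightarrow> bool" where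
  "lowbdd n r G \<longleftrightarrow> (\<exists>N. \<forall>e. (\<exists>i<r. e i < N) \<longrightarrow> (\<forall>k<n. G e k = 0))"

definition hcompat :: "('a::ab_group_add) hop list \<Rightarrow> bool" where
  "hcompat as \<longleftrightarrow> (\<forall>n\<ge>1. \<exists>m. \<forall>w. lowbdd n (length as) (polymult m (length as) (prodser as w)))"

definition pt2 :: "int \<Rightarrow> int \<Rightarrow> nat \<Rightarrow> int" where
  "pt2 j p = (\<lambda>i. if i = 0 then j else if i = 1 then p else 0)"

text \<open>YE_eq sc a b C: C (coefficients C l of z_0^l) is Y_E(a(z),z_0)b(z), i.e. for every n \<ge> 1
  and every admissible k, C mod h^n equals z_0^(-k)((z_1-z)^k a(z_1)b(z))|_(z_1=z+z_0) mod h^n.\<close>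
definition YE_eq :: "(complex \<Rightarrow> 'a \<Rightarrow> 'a) \<Rightarrow> ('a::ab_group_add) hop \<Rightarrow> 'a hop \<Rightarrow> (int \<Rightarrow> 'a hop) \<Rightarrow> bool" where
  "YE_eq sc a b C \<longleftrightarrow> (\<forall>n\<ge>1. \<forall>kk::nat.
     (\<forall>w. lowbdd n 2 (polymult kk 2 (prodser [a, b] w))) \<longrightarrow>
     (\<forall>w l q k. k < n \<longrightarrow> C l w k q =
        (if l + int kk < 0 then 0 else
          (\<Sum>j\<in>{j. polymult kk 2 (prodser [a, b] w) (pt2 j (q - j + l + int kk)) k \<noteq> 0}.
             sc ((of_int j :: complex) gchoose (nat (l + int kk)))
                (polymult kk 2 (prodser [a, b] w) (pt2 j (q - j + l + int kk)) k)))))"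

definition hnva :: "(complex \<Rightarrow> 'a \<Rightarrow> 'a) \<Rightarrow> ('a::ab_group_add) hser \<Rightarrow> ('a hser \<Rightarrow> 'a hop) \<Rightarrow> bool" where
  "hnva sc vac Y \<longleftrightarrow> Vector_Spaces.vector_space sc \<and>
     (\<forall>u. inE sc (Y u)) \<and>
     (\<forall>u v. Y (hadd u v) = (\<lambda>w. hladd (Y u w) (Y v w))) \<and>
     (\<forall>c u. Y (hsmult sc c u) = (\<lambda>w. Esmult sc c (Y u w))) \<and>
     Y vac = (\<lambda>w k m. if m = 0 then w k else 0) \<and>
     (\<forall>v k m. m < 0 \<longrightarrow> Y v vac k m = 0) \<and>
     (\<forall>v k. Y v vac k 0 = v k) \<and>
     (\<forall>us. hcompat (map Y us)) \<and>
     (\<forall>u v. YE_eq sc (Y u) (Y v) (\<lambda>l. Y (vcoef (Y u v) l)))"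

definition hmodule :: "(complex \<Rightarrow> 'a \<Rightarrow> 'a) \<Rightarrow> ('a::ab_group_add) hser \<Rightarrow> ('a hser \<Rightarrow> 'a hop)
    \<Rightarrow> (complex \<Rightarrow> 'b \<Rightarrow> 'b) \<Rightarrow> ('a hser \<Rightarrow> ('b::ab_group_add) hop) \<Rightarrow> bool" where
  "hmodule sc vac Y scW YW \<longleftrightarrow> Vector_Spaces.vector_space scW \<and>
     (\<forall>u. inE scW (YW u)) \<and>
     (\<forall>u v. YW (hadd u v) = (\<lambda>w. hladd (YW u w) (YW v w))) \<and>
     (\<forall>c u. YW (hsmult sc c u) = (\<lambda>w. Esmult scW c (YW u w))) \<and>
     YW vac = (\<lambda>w k m. if m = 0 then w k else 0) \<and>
     (\<forall>us. hcompat (map YW us)) \<and>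
     (\<forall>u v. YE_eq scW (YW u) (YW v) (\<lambda>l. YW (vcoef (Y u v) l)))"

definition hnva_hom :: "(complex \<Rightarrow> 'a \<Rightarrow> 'a) \<Rightarrow> ('a::ab_group_add) hser \<Rightarrow> ('a hser \<Rightarrow> 'a hop)
    \<Rightarrow> (complex \<Rightarrow> 'b \<Rightarrow> 'b) \<Rightarrow> ('b::ab_group_add) hser \<Rightarrow> ('b hser \<Rightarrow> 'b hop)
    \<Rightarrow> ('a hser \<Rightarrow> 'b hser) \<Rightarrow> bool" where
  "hnva_hom sU vacU YU sV vacV YV psi \<longleftrightarrow> hlinear sU sV psi \<and> psi vacU = vacV \<and>
     (\<forall>u v m. psi (vcoef (YU u v) m) = vcoef (YV (psi u) (psi v)) m)"

definition hsubmod :: "(complex \<Rightarrow> 'a \<Rightarrow> 'a) \<Rightarrow> ('a::ab_group_add) hser set \<Rightarrow> bool" where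
  "hsubmod sc A \<longleftrightarrow> (\<lambda>k. 0) \<in> A \<and> (\<forall>x\<in>A. \<forall>y\<in>A. hadd x y \<in> A) \<and>
     (\<forall>c. \<forall>x\<in>A. hsmult sc c x \<in> A)"

definition hsat :: "(complex \<Rightarrow> 'a \<Rightarrow> 'a) \<Rightarrow> ('a::ab_group_add) hser set \<Rightarrow> 'a hser set" where
  "hsat sc A = {v. \<exists>n. hsmult sc (hpow n) v \<in> A}"

definition hclosure :: "'a hser set \<Rightarrow> 'a hser set" where
  "hclosure A = {w. \<exists>f::nat \<Rightarrow> 'a hser. (\<forall>i. f i \<in> A) \<and> (\<forall>n. \<exists>i0. \<forall>i\<ge>i0. \<forall>k<n. f i k = w k)}"

definition hgenerated :: "(complex \<Rightarrow> 'a \<Rightarrow> 'a) \<Rightarrow> ('a::ab_group_add) hser \<Rightarrow> ('a hser \<Rightarrow> 'a hop)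
    \<Rightarrow> 'a hser set \<Rightarrow> bool" where
  "hgenerated sc vac Y S \<longleftrightarrow> (\<forall>U'. hsubmod sc U' \<and> hclosure U' = U' \<and> vac \<in> U' \<and> S \<subseteq> U' \<and>
     (\<forall>u\<in>U'. \<forall>v\<in>U'. \<forall>m. vcoef (Y u v) m \<in> U') \<and> hsat sc U' = U' \<longrightarrow> U' = UNIV)"

end

theory Submission
  imports Defs
begin

lemma vs_one: assumes "Vector_Spaces.vector_space sc" shows "sc 1 x = x"
proof - interpret vector_space sc by fact show ?thesis by simp qed

lemma vs_zero: assumes "Vector_Spaces.vector_space sc" shows "sc 0 x = 0"
proof - interpret vector_space sc by fact show ?thesis by simp qed

lemma hsmult_hpow:
  assumes "Vector_Spaces.vector_space sc"
  shows "hsmult sc (hpow n) u k = (if n \<le> k then u (k - n) else 0)"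
proof -
  have "hsmult sc (hpow n) u k = (\<Sum>i\<le>k. (if i = n then u (k - i) else 0))"
    unfolding hsmult_def hpow_def
    by (rule sum.cong) (auto simp: vs_one[OF assms] vs_zero[OF assms])
  also have "\<dots> = (if n \<le> k then u (k - n) else 0)"
    by (simp add: sum.delta)
  finally show ?thesis .
qed

lemma Esmult_hpow:
  assumes "Vector_Spaces.vector_space sc"
  shows "Esmult sc (hpow n) F k m = (if n \<le> k then F (k - n) m else 0)"
proof -
  have "Esmult sc (hpow n) F k m = (\<Sum>i\<le>k. (if i = n then F (k - i) m else 0))"
    unfolding Esmult_def hpow_def
    by (rule sum.cong) (auto simp: vs_one[OF assms] vs_zero[OF assms])
  also have "\<dots> = (if n \<le> k then F (k - n) m else 0)"
    by (simp add: sum.delta)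
  finally show ?thesis .
qed

lemma decomp:
  assumes "Vector_Spaces.vector_space sc" and "\<forall>j<n. u j = u' j"
  shows "u = hadd u' (hsmult sc (hpow n) (\<lambda>k. u (k + n) - u' (k + n)))"
  using assms(2) by (auto simp: hadd_def hsmult_hpow[OF assms(1)] fun_eq_iff)

lemma cont:
  assumes vs: "Vector_Spaces.vector_space sc" and vs': "Vector_Spaces.vector_space sc'"
    and add: "\<forall>u v. Y (hadd u v) = (\<lambda>w. hladd (Y u w) (Y v w))"
    and sm: "\<forall>c u. Y (hsmult sc c u) = (\<lambda>w. Esmult sc' c (Y u w))"
    and agree: "\<forall>j<n. u j = u' j" and kn: "k < n"
  shows "Y u w k m = Y u' w k m"
proof -
  have "Y u w k m = Y (hadd u' (hsmult sc (hpow n) (\<lambda>k. u (k + n) - u' (k + n)))) w k m"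
    by (subst decomp[OF vs agree]) (rule refl)
  also have "\<dots> = Y u' w k m"
    using kn by (simp add: add sm hladd_def Esmult_hpow[OF vs'])
  finally show ?thesis .
qed

lemma YE_unique:
  assumes "YE_eq sc a b C1" "YE_eq sc a b C2" "hcompat [a, b]"
  shows "C1 = C2"
proof (intro ext)
  fix l w k q
  have "\<exists>m. \<forall>w. lowbdd (Suc k) (length [a, b]) (polymult m (length [a, b]) (prodser [a, b] w))"
    using assms(3) unfolding hcompat_def by simp
  then obtain m where m: "\<forall>w. lowbdd (Suc k) 2 (polymult m 2 (prodser [a, b] w))"
    by (auto simp: numeral_2_eq_2)
  have k: "k < Suc k" "Suc k \<ge> 1" by auto
  have "C1 l w k q = (if l + int m < 0 then 0 else
          (\<Sum>j\<in>{j. polymult m 2 (prodser [a, b] w) (pt2 j (q - j + l + int m)) k \<noteq> 0}.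
             sc ((of_int j :: complex) gchoose (nat (l + int m)))
                (polymult m 2 (prodser [a, b] w) (pt2 j (q - j + l + int m)) k)))"
    using assms(1) m k unfolding YE_eq_def by blast
  moreover have "C2 l w k q = (if l + int m < 0 then 0 else
          (\<Sum>j\<in>{j. polymult m 2 (prodser [a, b] w) (pt2 j (q - j + l + int m)) k \<noteq> 0}.
             sc ((of_int j :: complex) gchoose (nat (l + int m)))
                (polymult m 2 (prodser [a, b] w) (pt2 j (q - j + l + int m)) k)))"
    using assms(2) m k unfolding YE_eq_def by blast
  ultimately show "C1 l w k q = C2 l w k q" by simp
qed

theorem proposition3p8:
  fixes sU :: "complex \<Rightarrow> 'u::ab_group_add \<Rightarrow> 'u" and vacU :: "'u hser" and YU :: "'u hser \<Rightarrow> 'u hop"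
    and sV :: "complex \<Rightarrow> 'v::ab_group_add \<Rightarrow> 'v" and vacV :: "'v hser" and YV :: "'v hser \<Rightarrow> 'v hop"
    and S :: "'u hser set" and YVU :: "'u hser \<Rightarrow> 'v hop" and psi0 :: "'u hser \<Rightarrow> 'v hser"
  assumes "hnva sU vacU YU" and "hnva sV vacV YV"
    and "hsubmod sU S" and "hgenerated sU vacU YU S"
    and "hmodule sU vacU YU sV YVU"
    and "\<forall>u k m. m < 0 \<longrightarrow> YVU u vacV k m = 0"
    and "\<forall>x\<in>S. \<forall>y\<in>S. psi0 (hadd x y) = hadd (psi0 x) (psi0 y)"
    and "\<forall>c. \<forall>x\<in>S. psi0 (hsmult sU c x) = hsmult sV c (psi0 x)"
    and "\<forall>s\<in>S. YVU s = YV (psi0 s)"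
  shows "\<exists>psi. hnva_hom sU vacU YU sV vacV YV psi \<and> (\<forall>s\<in>S. psi s = psi0 s)"
proof -
  have vsU: "Vector_Spaces.vector_space sU" using assms(1) by (simp add: hnva_def)
  have vsV: "Vector_Spaces.vector_space sV" and YV_add: "\<forall>u v. YV (hadd u v) = (\<lambda>w. hladd (YV u w) (YV v w))"
    and YV_sm: "\<forall>c u. YV (hsmult sV c u) = (\<lambda>w. Esmult sV c (YV u w))"
    and YV_vac: "YV vacV = (\<lambda>w k m. if m = 0 then w k else 0)"
    and YV_c0: "\<forall>v k. YV v vacV k 0 = v k"
    and YV_comp: "\<forall>us. hcompat (map YV us)"
    and YV_YE: "\<forall>u v. YE_eq sV (YV u) (YV v) (\<lambda>l. YV (vcoef (YV u v) l))"
    using assms(2) by (simp_all add: hnva_def)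
  have M_add: "\<forall>u v. YVU (hadd u v) = (\<lambda>w. hladd (YVU u w) (YVU v w))"
    and M_sm: "\<forall>c u. YVU (hsmult sU c u) = (\<lambda>w. Esmult sV c (YVU u w))"
    and M_vac: "YVU vacU = (\<lambda>w k m. if m = 0 then w k else 0)"
    and M_comp: "\<forall>us. hcompat (map YVU us)"
    and M_YE: "\<forall>u v. YE_eq sV (YVU u) (YVU v) (\<lambda>l. YVU (vcoef (YU u v) l))"
    using assms(5) by (simp_all add: hmodule_def)
  define psi where "psi u = (\<lambda>k. YVU u vacV k 0)" for u
  define U' where "U' = {u. YVU u = YV (psi u)}"
  have psi_add: "psi (hadd u v) = hadd (psi u) (psi v)" for u v
    unfolding psi_def M_add[rule_format] by (simp add: hladd_def hadd_def)
  have psi_sm: "psi (hsmult sU c u) = hsmult sV c (psi u)" for c u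
    unfolding psi_def M_sm[rule_format] by (simp add: Esmult_def hsmult_def)
  have psi_S: "psi s = psi0 s" if "s \<in> S" for s
    using that assms(9) YV_c0 by (simp add: psi_def)
  have SU: "S \<subseteq> U'" using psi_S assms(9) by (auto simp: U'_def)
  have psi_vac: "psi vacU = vacV" by (simp add: psi_def M_vac)
  have vacU': "vacU \<in> U'" by (simp add: U'_def psi_vac M_vac YV_vac)
  have sub: "hsubmod sU U'"
  proof -
    have "(\<lambda>k. 0) \<in> U'" using assms(3) SU by (auto simp: hsubmod_def)
    moreover have "hadd x y \<in> U'" if "x \<in> U'" "y \<in> U'" for x y
      using that by (simp add: U'_def M_add psi_add YV_add)
    moreover have "hsmult sU c x \<in> U'" if "x \<in> U'" for c x
      using that by (simp add: U'_def M_sm psi_sm YV_sm)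
    ultimately show ?thesis by (simp add: hsubmod_def)
  qed
  have prod: "vcoef (YU u v) l \<in> U' \<and> psi (vcoef (YU u v) l) = vcoef (YV (psi u) (psi v)) l"
    if "u \<in> U'" "v \<in> U'" for u v l
  proof -
    have e1: "YVU u = YV (psi u)" "YVU v = YV (psi v)" using that by (auto simp: U'_def)
    have "YE_eq sV (YV (psi u)) (YV (psi v)) (\<lambda>l. YVU (vcoef (YU u v) l))"
      using M_YE e1 by metis
    moreover have "hcompat [YV (psi u), YV (psi v)]" using YV_comp[rule_format, of "[psi u, psi v]"] by simp
    ultimately have "(\<lambda>l. YVU (vcoef (YU u v) l)) = (\<lambda>l. YV (vcoef (YV (psi u) (psi v)) l))"
      using YE_unique YV_YE by blast
    hence eq: "YVU (vcoef (YU u v) l) = YV (vcoef (YV (psi u) (psi v)) l)" by metis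
    hence ps: "psi (vcoef (YU u v) l) = vcoef (YV (psi u) (psi v)) l"
      by (simp add: psi_def YV_c0)
    show ?thesis using eq ps by (simp add: U'_def)
  qed
  have contM: "YVU u w k m = YVU u' w k m" if "\<forall>j<n. u j = u' j" "k < n" for u u' w k m n
    by (rule cont[OF vsU vsV M_add M_sm that])
  have contV: "YV u w k m = YV u' w k m" if "\<forall>j<n. u j = u' j" "k < n" for u u' w k m n
    by (rule cont[OF vsV vsV YV_add YV_sm that])
  have contpsi: "\<forall>j<n. psi u j = psi u' j" if "\<forall>j<n. u j = u' j" for u u' n
    using contM[OF that] by (simp add: psi_def)
  have clos: "hclosure U' = U'"
  proof
    show "U' \<subseteq> hclosure U'"
    proof
      fix x assume x: "x \<in> U'"
      show "x \<in> hclosure U'" unfolding hclosure_def mem_Collect_eq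
        using x by (intro exI[of _ "\<lambda>i. x"]) auto
    qed
    show "hclosure U' \<subseteq> U'"
    proof
      fix w assume "w \<in> hclosure U'"
      then obtain f :: "nat \<Rightarrow> 'u hser" where f: "\<forall>i. f i \<in> U'" "\<forall>n. \<exists>i0. \<forall>i\<ge>i0. \<forall>k<n. f i k = w k"
        unfolding hclosure_def mem_Collect_eq by (elim exE conjE)
      have "YVU w x k m = YV (psi w) x k m" for x k m
      proof -
        obtain i0 where i0: "\<forall>i\<ge>i0. \<forall>j<Suc k. f i j = w j" using f(2) by blast
        hence ag: "\<forall>j<Suc k. w j = f i0 j" by auto
        have "YVU w x k m = YVU (f i0) x k m" using contM[OF ag] by simp
        also have "\<dots> = YV (psi (f i0)) x k m" using f(1) by (simp add: U'_def)
        also have "\<dots> = YV (psi w) x k m"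
          using contV[OF contpsi[OF ag]] by simp
        finally show ?thesis .
      qed
      thus "w \<in> U'" by (auto simp: U'_def fun_eq_iff)
    qed
  qed
  have sat: "hsat sU U' = U'"
  proof
    show "U' \<subseteq> hsat sU U'"
    proof
      fix v assume "v \<in> U'"
      moreover have "hsmult sU (hpow 0) v = v" by (simp add: fun_eq_iff hsmult_hpow[OF vsU])
      ultimately show "v \<in> hsat sU U'" unfolding hsat_def by (metis mem_Collect_eq)
    qed
    show "hsat sU U' \<subseteq> U'"
    proof
      fix v assume "v \<in> hsat sU U'"
      then obtain n where "hsmult sU (hpow n) v \<in> U'" by (auto simp: hsat_def)
      hence h: "(\<lambda>w. Esmult sV (hpow n) (YVU v w)) = (\<lambda>w. Esmult sV (hpow n) (YV (psi v) w))"
        by (simp add: U'_def M_sm psi_sm YV_sm)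
      have "YVU v x k m = YV (psi v) x k m" for x k m
        using fun_cong[OF fun_cong[OF fun_cong[OF h, of x], of "k + n"], of m]
        by (simp add: Esmult_hpow[OF vsV])
      thus "v \<in> U'" by (auto simp: U'_def fun_eq_iff)
    qed
  qed
  have P: "hsubmod sU U' \<and> hclosure U' = U' \<and> vacU \<in> U' \<and> S \<subseteq> U' \<and>
     (\<forall>u\<in>U'. \<forall>v\<in>U'. \<forall>m. vcoef (YU u v) m \<in> U') \<and> hsat sU U' = U'"
    using sub clos vacU' SU sat prod by blast
  have all: "U' = UNIV"
    using assms(4) P unfolding hgenerated_def by (elim allE[of _ U']) (erule mp)
  have hom: "\<forall>u v m. psi (vcoef (YU u v) m) = vcoef (YV (psi u) (psi v)) m"
    using prod all by blast
  have "hnva_hom sU vacU YU sV vacV YV psi"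
    unfolding hnva_hom_def hlinear_def using psi_add psi_sm psi_vac hom by blast
  thus ?thesis using psi_S by blast
qed

end
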